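(* If $\mathcal C_j\cap\mathcal D=\emptyset$, then $c'_j=0$ and, as $x\to\infty$, $$1-F_j(x)=c_jx^{-1/\alpha_0}+\Big(d_j-\frac{c_j^2}{2}\Big)x^{-2/\alpha_0}+o\big(x^{-2/\alpha_0}\big).$$
   Context: Standing model. Fix $\alpha\in(0,1)$, $\alpha_0>0$, $\tau>0$, an integer $K\ge1$ and tilting parameters $\theta_1,\dots,\theta_K\ge0$. Let $\mathcal D=\{k:\theta_k=0\}$ and $\bar{\mathcal D}=\{1,\dots,K\}\setminus\mathcal D$. Fix locations $\boldsymbol s_1,\dots,\boldsymbol s_{n_s}$ and nonnegative weights $\omega_{kj}$; let $\mathcal C_j=\{k:\omega_{kj}\neq0\}$ and assume $\mathcal C_j\neq\emptyset$ for every $j$. Let $Z_1,\dots,Z_K$ be independent positive random variables with $E[e^{-sZ_k}]=\exp[-\{(\theta_k+s)^\alpha-\theta_k^\alpha\}]$, $s\ge0$. Let $\epsilon_1,\dots,\epsilon_{n_s}$ be i.i.d., independent of the $Z_k$, with $\Pr(\epsilon_j\le x)=\exp\{-(x/\tau)^{-1/\alpha_0}\}$, $x>0$. Define $X_j=\epsilon_j\big(\sum_{k=1}^K\omega_{kj}^{1/\alpha}Z_k\big)^{\alpha_0}$ and $F_j$ its distribution function. Constants: $c_j=\alpha\tau^{1/\alpha_0}\sum_{k\in\bar{\mathcal D}}\theta_k^{\alpha-1}\omega_{kj}^{1/\alpha}$, $c'_j=\tau^{\alpha/\alpha_0}\sum_{k\in\mathcal D}\omega_{kj}$, $d_j=\frac{\alpha(\alpha-1)}{2}\tau^{2/\alpha_0}\sum_{k\in\bar{\mathcal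 D}}\theta_k^{\alpha-2}\omega_{kj}^{2/\alpha}$. *)

theory Defs
  imports "HOL-Probability.Probability" "HOL-Library.Landau_Symbols"
begin

text \<open>Index sets. Latent components are indexed by k in {1..K}, locations by j in {1..ns}.\<close>

definition Dset :: "nat \<Rightarrow> (nat \<Rightarrow> real) \<Rightarrow> nat set" where
  "Dset K \<theta> = {k \<in> {1..K}. \<theta> k = 0}"

definition Dbar :: "nat \<Rightarrow> (nat \<Rightarrow> real) \<Rightarrow> nat set" where
  "Dbar K \<theta> = {1..K} - Dset K \<theta>"

definition Cset :: "nat \<Rightarrow> (nat \<Rightarrow> nat \<Rightarrow> real) \<Rightarrow> nat \<Rightarrow> nat set" where
  "Cset K w j = {k \<in> {1..K}. w k j \<noteq> 0}"

definition cconst :: "real \<Rightarrow> real \<Rightarrow> real \<Rightarrow> nat \<Rightarrow> (nat \<Rightarrow> real) \<Rightarrow> (nat \<Rightarrow> nat \<Rightarrow> real) \<Rightarrow> nat \<Rightarrow> real" where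
  "cconst \<alpha> \<alpha>0 \<tau> K \<theta> w j =
     \<alpha> * \<tau> powr (1 / \<alpha>0) * (\<Sum>k\<in>Dbar K \<theta>. \<theta> k powr (\<alpha> - 1) * w k j powr (1 / \<alpha>))"

definition cconst' :: "real \<Rightarrow> real \<Rightarrow> real \<Rightarrow> nat \<Rightarrow> (nat \<Rightarrow> real) \<Rightarrow> (nat \<Rightarrow> nat \<Rightarrow> real) \<Rightarrow> nat \<Rightarrow> real" where
  "cconst' \<alpha> \<alpha>0 \<tau> K \<theta> w j = \<tau> powr (\<alpha> / \<alpha>0) * (\<Sum>k\<in>Dset K \<theta>. w k j)"

definition dconst :: "real \<Rightarrow> real \<Rightarrow> real \<Rightarrow> nat \<Rightarrow> (nat \<Rightarrow> real) \<Rightarrow> (nat \<Rightarrow> nat \<Rightarrow> real) \<Rightarrow> nat \<Rightarrow> real" where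
  "dconst \<alpha> \<alpha>0 \<tau> K \<theta> w j =
     \<alpha> * (\<alpha> - 1) / 2 * \<tau> powr (2 / \<alpha>0) *
       (\<Sum>k\<in>Dbar K \<theta>. \<theta> k powr (\<alpha> - 2) * w k j powr (2 / \<alpha>))"

definition Xproc :: "real \<Rightarrow> real \<Rightarrow> nat \<Rightarrow> (nat \<Rightarrow> nat \<Rightarrow> real) \<Rightarrow> (nat \<Rightarrow> 'a \<Rightarrow> real)
    \<Rightarrow> (nat \<Rightarrow> 'a \<Rightarrow> real) \<Rightarrow> nat \<Rightarrow> 'a \<Rightarrow> real" where
  "Xproc \<alpha> \<alpha>0 K w Z eps j \<omega> =
     eps j \<omega> * (\<Sum>k=1..K. w k j powr (1 / \<alpha>) * Z k \<omega>) powr \<alpha>0"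

definition Fdist :: "'a measure \<Rightarrow> ('a \<Rightarrow> real) \<Rightarrow> real \<Rightarrow> real" where
  "Fdist M X x = measure M {\<omega> \<in> space M. X \<omega> \<le> x}"

end

theory Submission
  imports Defs "HOL-Real_Asymp.Real_Asymp"
begin


lemma one_plus_expand:
  fixes al :: real
  shows "((\<lambda>u. ((1 + u) powr al - 1 - al*u - al*(al-1)/2*u^2)/u^2) \<longlongrightarrow> 0) (at_right 0)"
  by real_asymp

lemma exp_expand:
  "((\<lambda>y::real. (1 - exp(-y) - y + y^2/2)/y^2) \<longlongrightarrow> 0) (at_right 0)"
  by real_asymp

lemma phi_expand:
  fixes th a al :: real
  assumes th: "th > 0" and a: "a \<ge> 0"
  shows "((\<lambda>t. ((th + t*a) powr al - th powr al - al*th powr (al-1)*a*t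
          - al*(al-1)/2*th powr (al-2)*a^2*t^2)/t^2) \<longlongrightarrow> 0) (at_right 0)"
proof (cases "a = 0")
  case True
  then show ?thesis by simp
next
  case False
  with a have a: "a > 0" by simp
  define u where "u t = t*a/th" for t
  have lim_u: "filterlim u (at_right 0) (at_right 0)"
    unfolding u_def using a th by real_asymp
  have L0: "((\<lambda>t. th powr al * a^2 / th^2 * (((1 + u t) powr al - 1 - al*u t - al*(al-1)/2*(u t)^2)/(u t)^2)) \<longlongrightarrow> th powr al * a^2 / th^2 * 0) (at_right 0)"
    by (intro tendsto_mult tendsto_const filterlim_compose[OF one_plus_expand lim_u])
  have L: "((\<lambda>t. th powr al * a^2 / th^2 * (((1 + u t) powr al - 1 - al*u t - al*(al-1)/2*(u t)^2)/(u t)^2)) \<longlongrightarrow> 0) (at_right 0)"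
    using L0 by simp
  show ?thesis
  proof (rule Lim_transform_eventually[OF L])
    have H: "\<forall>t>0. th powr al * a^2 / th^2 * (((1 + u t) powr al - 1 - al*u t - al*(al-1)/2*(u t)^2)/(u t)^2)
       = ((th + t*a) powr al - th powr al - al*th powr (al-1)*a*t
          - al*(al-1)/2*th powr (al-2)*a^2*t^2)/t^2"
    proof (intro allI impI)
      fix t :: real assume t: "t > 0"
      have e1: "(th + t*a) powr al = th powr al * (1 + u t) powr al"
      proof -
        have "th + t*a = th*(1 + u t)" using th by (simp add: u_def field_simps)
        then show ?thesis using th a t by (simp add: u_def powr_mult)
      qed
      have e2: "th powr (al-1) = th powr al / th" using th by (simp add: powr_diff)
      have e3: "th powr (al-2) = th powr al / th^2" using th by (simp add: powr_diff)
      show "th powr al * a^2 / th^2 * (((1 + u t) powr al - 1 - al*u t - al*(al-1)/2*(u t)^2)/(u t)^2)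
       = ((th + t*a) powr al - th powr al - al*th powr (al-1)*a*t
          - al*(al-1)/2*th powr (al-2)*a^2*t^2)/t^2"
        unfolding e1 e2 e3 using th a t by (simp add: u_def field_simps power2_eq_square)
    qed
    show "\<forall>\<^sub>F t in at_right 0. th powr al * a^2 / th^2 * (((1 + u t) powr al - 1 - al*u t - al*(al-1)/2*(u t)^2)/(u t)^2)
       = ((th + t*a) powr al - th powr al - al*th powr (al-1)*a*t
          - al*(al-1)/2*th powr (al-2)*a^2*t^2)/t^2"
      using eventually_at_right_less[of 0] by (rule eventually_mono) (use H in simp)
  qed
qed

lemma alg_identity:
  fixes t P C D G :: real
  assumes "t \<noteq> 0" "P \<noteq> 0"
  shows "(1 - exp(-P) - C*t - (D - C^2/2)*t^2)/t^2
     = ((1 - exp(-P) - P + P^2/2)/P^2) * (P/t)^2 + (P - C*t - D*t^2)/t^2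
       - (D + (P - C*t - D*t^2)/t^2) * (P + C*t) / 2"
  using assms by (simp add: field_simps power2_eq_square)

lemma main_asymp:
  fixes A :: "nat set" and th a :: "nat \<Rightarrow> real" and al :: real
  assumes fin: "finite A" and thpos: "\<forall>k\<in>A. th k > 0" and anonneg: "\<forall>k\<in>A. a k \<ge> 0"
    and ex: "\<exists>k\<in>A. a k > 0" and al: "0 < al"
  defines "P \<equiv> \<lambda>t. \<Sum>k\<in>A. ((th k + t * a k) powr al - th k powr al)"
    and "C \<equiv> al * (\<Sum>k\<in>A. th k powr (al - 1) * a k)"
    and "D \<equiv> al * (al - 1) / 2 * (\<Sum>k\<in>A. th k powr (al - 2) * (a k)^2)"
  shows "((\<lambda>t. (1 - exp (- P t) - C*t - (D - C^2/2)*t^2)/t^2) \<longlongrightarrow> 0) (at_right 0)"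
proof -
  define r where "r t = P t - C*t - D*t^2" for t
  have r_eq: "r t / t^2 = (\<Sum>k\<in>A. ((th k + t*a k) powr al - th k powr al - al*th k powr (al-1)*a k*t
          - al*(al-1)/2*th k powr (al-2)*(a k)^2*t^2)/t^2)" for t
  proof -
    have "r t = (\<Sum>k\<in>A. ((th k + t*a k) powr al - th k powr al - al*th k powr (al-1)*a k*t
          - al*(al-1)/2*th k powr (al-2)*(a k)^2*t^2))"
      unfolding r_def P_def C_def D_def
      by (simp add: sum_subtractf sum_distrib_left sum_distrib_right mult_ac)
    then show ?thesis by (simp add: sum_divide_distrib)
  qed
  have lr: "((\<lambda>t. r t / t^2) \<longlongrightarrow> 0) (at_right 0)"
    unfolding r_eq using thpos anonneg
    by (intro tendsto_null_sum phi_expand) auto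
  have ev_t: "\<forall>\<^sub>F t in at_right (0::real). t > 0" by (rule eventually_at_right_less)
  have lPt0: "((\<lambda>t. C + D*t + t * (r t / t^2)) \<longlongrightarrow> C + D*0 + 0 * 0) (at_right 0)"
    by (intro tendsto_intros lr)
  have lPt: "((\<lambda>t. P t / t) \<longlongrightarrow> C) (at_right 0)"
  proof (rule Lim_transform_eventually)
    show "((\<lambda>t. C + D*t + t * (r t / t^2)) \<longlongrightarrow> C) (at_right 0)" using lPt0 by simp
    show "\<forall>\<^sub>F t in at_right 0. C + D*t + t * (r t / t^2) = P t / t"
      using ev_t by (rule eventually_mono) (simp add: r_def field_simps power2_eq_square)
  qed
  have lP0: "((\<lambda>t. t * (P t / t)) \<longlongrightarrow> 0 * C) (at_right 0)"
    by (intro tendsto_intros lPt)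
  have lP: "(P \<longlongrightarrow> 0) (at_right 0)"
  proof (rule Lim_transform_eventually)
    show "((\<lambda>t. t * (P t / t)) \<longlongrightarrow> 0) (at_right 0)" using lP0 by simp
    show "\<forall>\<^sub>F t in at_right 0. t * (P t / t) = P t"
      using ev_t by (rule eventually_mono) simp
  qed
  obtain k0 where k0: "k0 \<in> A" "a k0 > 0" using ex by blast
  have Ppos: "P t > 0" if t: "t > 0" for t
    unfolding P_def
  proof (rule sum_pos2[OF fin k0(1)])
    have "th k0 powr al < (th k0 + t * a k0) powr al"
      using thpos k0 t al by (intro powr_less_mono2) auto
    then show "0 < (th k0 + t * a k0) powr al - th k0 powr al" by simp
    show "\<And>i. i \<in> A \<Longrightarrow> 0 \<le> (th i + t * a i) powr al - th i powr al"
    proof -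
      fix i assume i: "i \<in> A"
      have "th i powr al \<le> (th i + t * a i) powr al"
        using thpos anonneg i t al by (intro powr_mono2) auto
      then show "0 \<le> (th i + t * a i) powr al - th i powr al" by simp
    qed
  qed
  have fP: "filterlim P (at_right 0) (at_right 0)"
    by (rule tendsto_imp_filterlim_at_right[OF lP]) (use ev_t in \<open>rule eventually_mono\<close>, use Ppos in auto)
  have lG: "((\<lambda>t. (1 - exp(-P t) - P t + (P t)^2/2)/(P t)^2) \<longlongrightarrow> 0) (at_right 0)"
    by (rule filterlim_compose[OF exp_expand fP])
  have lim: "((\<lambda>t. ((1 - exp(-P t) - P t + (P t)^2/2)/(P t)^2) * (P t/t)^2 + r t/t^2
       - (D + r t/t^2) * (P t + C*t) / 2) \<longlongrightarrow> 0 * C^2 + 0 - (D + 0) * (0 + C*0) / 2) (at_right 0)"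
    by (intro tendsto_intros lG lPt lr lP) simp_all
  show ?thesis
  proof (rule Lim_transform_eventually)
    show "((\<lambda>t. ((1 - exp(-P t) - P t + (P t)^2/2)/(P t)^2) * (P t/t)^2 + r t/t^2
       - (D + r t/t^2) * (P t + C*t) / 2) \<longlongrightarrow> 0) (at_right 0)" using lim by simp
    show "\<forall>\<^sub>F t in at_right 0. ((1 - exp(-P t) - P t + (P t)^2/2)/(P t)^2) * (P t/t)^2 + r t/t^2
       - (D + r t/t^2) * (P t + C*t) / 2 = (1 - exp (- P t) - C*t - (D - C^2/2)*t^2)/t^2"
      using ev_t
    proof (rule eventually_mono)
      fix t :: real assume t: "t > 0"
      show "((1 - exp(-P t) - P t + (P t)^2/2)/(P t)^2) * (P t/t)^2 + r t/t^2
       - (D + r t/t^2) * (P t + C*t) / 2 = (1 - exp (- P t) - C*t - (D - C^2/2)*t^2)/t^2"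
        unfolding r_def using alg_identity[of t "P t" C D] Ppos[OF t] t by simp
    qed
  qed
qed

lemma final_asymp:
  fixes f e :: "real \<Rightarrow> real" and tau a0 :: real
  assumes tau: "tau > 0" and a0: "a0 > 0"
    and lim: "((\<lambda>t. e t / t^2) \<longlongrightarrow> 0) (at_right 0)"
    and eq: "\<forall>x>0. f x = e ((x/tau) powr (-1/a0))"
  shows "f \<in> o[at_top](\<lambda>x. x powr (-2/a0))"
proof (rule smalloI_tendsto)
  define T where "T x = (x/tau) powr (-1/a0)" for x
  have fT: "filterlim T (at_right 0) at_top"
    unfolding T_def using tau a0 by real_asymp
  have L0: "((\<lambda>x. tau powr (2/a0) * (e (T x) / (T x)^2)) \<longlongrightarrow> tau powr (2/a0) * 0) at_top"
    by (intro tendsto_intros filterlim_compose[OF lim fT])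
  show "((\<lambda>x. f x / x powr (-2/a0)) \<longlongrightarrow> 0) at_top"
  proof (rule Lim_transform_eventually)
    show "((\<lambda>x. tau powr (2/a0) * (e (T x) / (T x)^2)) \<longlongrightarrow> 0) at_top" using L0 by simp
    show "\<forall>\<^sub>F x in at_top. tau powr (2/a0) * (e (T x) / (T x)^2) = f x / x powr (-2/a0)"
      using eventually_gt_at_top[of 0]
    proof (rule eventually_mono)
      fix x :: real assume x: "x > 0"
      have "(T x)^2 = (x/tau) powr (-2/a0)"
        unfolding T_def using x tau by (simp add: powr_powr[symmetric] powr_realpow[symmetric] powr_powr)
      also have "\<dots> = x powr (-2/a0) / tau powr (-2/a0)" using x tau by (simp add: powr_divide)
      finally have T2: "(T x)^2 = x powr (-2/a0) * tau powr (2/a0)"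
        using tau by (simp add: powr_minus_divide divide_simps)
      show "tau powr (2/a0) * (e (T x) / (T x)^2) = f x / x powr (-2/a0)"
        unfolding T2 using eq x tau by (simp add: T_def)
    qed
  qed
  show "\<forall>\<^sub>F x in at_top. x powr (-2/a0) \<noteq> 0"
    using eventually_gt_at_top[of 0] by (rule eventually_mono) simp
qed



lemma laplace_F:
  fixes M :: "'a measure" and Z eps :: "nat \<Rightarrow> 'a \<Rightarrow> real" and a th :: "nat \<Rightarrow> real"
    and al a0 tau x :: real
  assumes P: "prob_space M"
    and indep: "prob_space.indep_vars M (\<lambda>_. borel) (case_sum Z eps) ({1..K} <+> {1..ns})"
    and Zpos: "\<forall>k\<in>{1..K}. AE \<omega> in M. 0 < Z k \<omega>"
    and Zlap: "\<forall>k\<in>{1..K}. \<forall>s\<ge>0.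
         integral\<^sup>L M (\<lambda>\<omega>. exp (- s * Z k \<omega>)) = exp (- ((th k + s) powr al - th k powr al))"
    and epsd: "\<forall>x>0. measure M {\<omega> \<in> space M. eps j \<omega> \<le> x} = exp (- ((x / tau) powr (- 1 / a0)))"
    and j: "j \<in> {1..ns}" and anon: "\<forall>k\<in>{1..K}. 0 \<le> a k" and ex: "\<exists>k\<in>{1..K}. 0 < a k"
    and tau: "0 < tau" and a0: "0 < a0" and x: "0 < x"
  shows "measure M {\<omega> \<in> space M. eps j \<omega> * (\<Sum>k=1..K. a k * Z k \<omega>) powr a0 \<le> x}
       = exp (- (\<Sum>k=1..K. (th k + (x/tau) powr (-1/a0) * a k) powr al - th k powr al))"
proof -
  interpret prob_space M by (rule P)
  define I where "I = {1..K} <+> {1..ns}"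
  define S where "S \<omega> = (\<Sum>k=1..K. a k * Z k \<omega>)" for \<omega>
  define E where "E = eps j"
  define t where "t = (x/tau) powr (-1/a0)"
  have t0: "t \<ge> 0" unfolding t_def by simp
  have rv: "\<And>i. i \<in> I \<Longrightarrow> random_variable borel (case_sum Z eps i)"
    using indep unfolding I_def indep_vars_def by auto
  have Zm[measurable]: "Z k \<in> borel_measurable M" if "k \<in> {1..K}" for k
  proof -
    have "Inl k \<in> I" unfolding I_def using that by (rule InlI)
    from rv[OF this] show ?thesis by simp
  qed
  have Em[measurable]: "E \<in> borel_measurable M"
  proof -
    have "Inr j \<in> I" unfolding I_def using j by (rule InrI)
    from rv[OF this] show ?thesis by (simp add: E_def)
  qed
  have Sm[measurable]: "S \<in> borel_measurable M"
    unfolding S_def by (intro borel_measurable_sum borel_measurable_times borel_measurable_const Zm) auto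

  have Zint: "integrable M (\<lambda>\<omega>. exp (- s * Z k \<omega>))" if "k \<in> {1..K}" "s \<ge> 0" for k s
  proof (rule ccontr)
    assume "\<not> integrable M (\<lambda>\<omega>. exp (- s * Z k \<omega>))"
    then have "integral\<^sup>L M (\<lambda>\<omega>. exp (- s * Z k \<omega>)) = 0" by (rule not_integrable_integral_eq)
    with Zlap that show False by simp
  qed
  have indY: "indep_vars (\<lambda>_. borel) (\<lambda>i \<omega>. exp (- (t * a (projl i)) * case_sum Z eps i \<omega>)) (Inl ` {1..K})"
    by (rule indep_vars_compose2[OF indep_vars_subset[OF indep]]) auto
  have intY: "integrable M (\<lambda>\<omega>. exp (- (t * a (projl i)) * case_sum Z eps i \<omega>))" if "i \<in> Inl ` {1..K}" for i
    using that Zint anon t0 by auto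
  have prodeq: "(\<Prod>i\<in>Inl ` {1..K}. exp (- (t * a (projl i)) * case_sum Z eps i \<omega>)) = exp (- t * S \<omega>)" for \<omega>
  proof -
    have "(\<Prod>i\<in>Inl ` {1..K}. exp (- (t * a (projl i)) * case_sum Z eps i \<omega>))
        = (\<Prod>k\<in>{1..K}. exp (- (t * a k) * Z k \<omega>))"
      by (subst prod.reindex) (auto simp: inj_on_def)
    also have "\<dots> = exp (\<Sum>k\<in>{1..K}. - (t * a k) * Z k \<omega>)" by (simp add: exp_sum)
    also have "(\<Sum>k\<in>{1..K}. - (t * a k) * Z k \<omega>) = - t * S \<omega>"
      by (simp add: S_def sum_distrib_left sum_negf mult.assoc)
    finally show ?thesis .
  qed
  have intS: "integrable M (\<lambda>\<omega>. exp (- t * S \<omega>))"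
    using indep_vars_integrable[OF finite_imageI[OF finite_atLeastAtMost] indY intY] unfolding prodeq .
  have lapS: "integral\<^sup>L M (\<lambda>\<omega>. exp (- t * S \<omega>))
      = exp (- (\<Sum>k=1..K. (th k + t * a k) powr al - th k powr al))"
  proof -
    have "integral\<^sup>L M (\<lambda>\<omega>. exp (- t * S \<omega>))
        = (\<Prod>i\<in>Inl ` {1..K}. integral\<^sup>L M (\<lambda>\<omega>. exp (- (t * a (projl i)) * case_sum Z eps i \<omega>)))"
      using indep_vars_lebesgue_integral[OF finite_imageI[OF finite_atLeastAtMost] indY intY] unfolding prodeq .
    also have "\<dots> = (\<Prod>k\<in>{1..K}. integral\<^sup>L M (\<lambda>\<omega>. exp (- (t * a k) * Z k \<omega>)))"
      by (subst prod.reindex) (auto simp: inj_on_def)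
    also have "\<dots> = (\<Prod>k\<in>{1..K}. exp (- ((th k + t * a k) powr al - th k powr al)))"
      using Zlap anon t0 by (intro prod.cong) auto
    also have "\<dots> = exp (- (\<Sum>k=1..K. (th k + t * a k) powr al - th k powr al))"
      by (simp add: exp_sum[symmetric] sum_negf[symmetric])
    finally show ?thesis .
  qed
  obtain k0 where k0: "k0 \<in> {1..K}" "0 < a k0" using ex by blast
  have Spos: "AE \<omega> in M. 0 < S \<omega>"
  proof -
    have "AE \<omega> in M. \<forall>k\<in>{1..K}. 0 < Z k \<omega>"
      by (rule AE_finite_allI) (use Zpos in auto)
    then show ?thesis
    proof (rule eventually_mono)
      fix \<omega> assume H: "\<forall>k\<in>{1..K}. 0 < Z k \<omega>"
      have "0 < a k0 * Z k0 \<omega>" using H k0 by simp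
      also have "a k0 * Z k0 \<omega> \<le> S \<omega>"
      proof -
        have nn: "\<forall>k\<in>{1..K}. 0 \<le> a k * Z k \<omega>"
          using H anon by (auto intro!: mult_nonneg_nonneg simp: less_imp_le)
        show ?thesis unfolding S_def using nn k0
          by (intro member_le_sum) auto
      qed
      finally show "0 < S \<omega>" .
    qed
  qed
  have indSE: "indep_var borel S borel E"
  proof -
    have Y1: "(\<lambda>f. \<Sum>k=1..K. a k * f (Inl k)) \<in> borel_measurable (PiM (Inl ` {1..K}) (\<lambda>_. borel))"
      by (intro borel_measurable_sum borel_measurable_times borel_measurable_const
          measurable_component_singleton[where M="\<lambda>_. borel", simplified]) auto
    have Y2: "(\<lambda>f. f (Inr j)) \<in> borel_measurable (PiM {Inr j} (\<lambda>_. borel))"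
      by (intro measurable_component_singleton[where M="\<lambda>_. borel", simplified]) auto
    have "indep_var borel ((\<lambda>f. \<Sum>k=1..K. a k * f (Inl k)) \<circ> (\<lambda>\<omega>. restrict (\<lambda>i. case_sum Z eps i \<omega>) (Inl ` {1..K})))
        borel ((\<lambda>f. f (Inr j)) \<circ> (\<lambda>\<omega>. restrict (\<lambda>i. case_sum Z eps i \<omega>) {Inr j}))"
      by (rule indep_var_compose[OF indep_var_restrict[OF indep] Y1 Y2])
         (use j in \<open>auto simp: Plus_def\<close>)
    also have "((\<lambda>f. \<Sum>k=1..K. a k * f (Inl k)) \<circ> (\<lambda>\<omega>. restrict (\<lambda>i. case_sum Z eps i \<omega>) (Inl ` {1..K}))) = S"
      by (auto simp: S_def fun_eq_iff intro!: sum.cong)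
    also have "((\<lambda>f. f (Inr j)) \<circ> (\<lambda>\<omega>. restrict (\<lambda>i. case_sum Z eps i \<omega>) {Inr j})) = E"
      by (auto simp: E_def fun_eq_iff)
    finally show ?thesis .
  qed
  have deq: "distr M borel S \<Otimes>\<^sub>M distr M borel E = distr M (borel \<Otimes>\<^sub>M borel) (\<lambda>\<omega>. (S \<omega>, E \<omega>))"
    using indSE unfolding indep_var_distribution_eq by blast
  define B where "B = {p::real\<times>real. snd p * fst p powr a0 \<le> x}"
  have Bs0: "{p \<in> space (borel \<Otimes>\<^sub>M borel). snd p * fst p powr a0 \<le> x} \<in> sets (borel \<Otimes>\<^sub>M (borel :: real measure))"
    by measurable
  have Bs: "B \<in> sets (borel \<Otimes>\<^sub>M borel)"
    using Bs0 by (simp add: B_def space_pair_measure)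
  interpret PS: prob_space "distr M borel S" by (rule prob_space_distr) simp
  interpret PE: prob_space "distr M borel E" by (rule prob_space_distr) simp
  have Bs': "B \<in> sets (distr M borel S \<Otimes>\<^sub>M distr M borel E)"
    using Bs by (simp cong: sets_pair_measure_cong)
  have sec: "emeasure (distr M borel E) (Pair s -` B) = ennreal (exp (- t * s))" if s: "s > 0" for s
  proof -
    have sp: "s powr a0 > 0" using s by simp
    define y where "y = x / s powr a0"
    have y: "y > 0" using x sp by (simp add: y_def)
    have "Pair s -` B = {..y}"
      using sp by (auto simp: B_def y_def field_simps)
    then have "emeasure (distr M borel E) (Pair s -` B) = emeasure M (E -` {..y} \<inter> space M)"
      by (simp add: emeasure_distr)
    also have "E -` {..y} \<inter> space M = {\<omega> \<in> space M. eps j \<omega> \<le> y}"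
      by (auto simp: E_def)
    also have "emeasure M \<dots> = ennreal (exp (- ((y / tau) powr (- 1 / a0))))"
      using epsd y by (simp add: emeasure_eq_measure)
    also have "(y / tau) powr (- 1 / a0) = t * s"
    proof -
      have "(y / tau) powr (- 1 / a0) = ((x/tau) / s powr a0) powr (- 1 / a0)"
        by (simp add: y_def field_simps)
      also have "\<dots> = (x/tau) powr (- 1 / a0) / (s powr a0) powr (- 1 / a0)"
        using x tau sp by (intro powr_divide)
      also have "(s powr a0) powr (- 1 / a0) = s powr (-1)"
        using a0 by (simp add: powr_powr)
      also have "s powr (-1) = 1 / s" using s by (simp add: powr_minus_divide)
      finally show ?thesis by (simp add: t_def)
    qed
    finally show ?thesis by simp
  qed
  have "measure M {\<omega> \<in> space M. eps j \<omega> * (\<Sum>k=1..K. a k * Z k \<omega>) powr a0 \<le> x}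
      = measure (distr M (borel \<Otimes>\<^sub>M borel) (\<lambda>\<omega>. (S \<omega>, E \<omega>))) B"
    by (subst measure_distr[OF measurable_Pair[OF Sm Em] Bs]) (auto simp: B_def S_def E_def intro!: arg_cong[where f="measure M"])
  also have "\<dots> = measure (distr M borel S \<Otimes>\<^sub>M distr M borel E) B" by (simp add: deq)
  finally have m1: "measure M {\<omega> \<in> space M. eps j \<omega> * (\<Sum>k=1..K. a k * Z k \<omega>) powr a0 \<le> x}
      = measure (distr M borel S \<Otimes>\<^sub>M distr M borel E) B" .
  have "emeasure (distr M borel S \<Otimes>\<^sub>M distr M borel E) B
      = (\<integral>\<^sup>+s. emeasure (distr M borel E) (Pair s -` B) \<partial>distr M borel S)"
    by (rule PE.emeasure_pair_measure_alt[OF Bs'])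
  also have "\<dots> = (\<integral>\<^sup>+s. ennreal (exp (- t * s)) \<partial>distr M borel S)"
  proof (rule nn_integral_cong_AE)
    have "AE s in distr M borel S. 0 < s"
      by (subst AE_distr_iff) (use Spos in auto)
    then show "AE s in distr M borel S. emeasure (distr M borel E) (Pair s -` B) = ennreal (exp (- t * s))"
      by (rule eventually_mono) (rule sec)
  qed
  also have "\<dots> = (\<integral>\<^sup>+\<omega>. ennreal (exp (- t * S \<omega>)) \<partial>M)"
    by (subst nn_integral_distr) auto
  also have "\<dots> = ennreal (integral\<^sup>L M (\<lambda>\<omega>. exp (- t * S \<omega>)))"
    by (rule nn_integral_eq_integral[OF intS]) auto
  finally have em: "emeasure (distr M borel S \<Otimes>\<^sub>M distr M borel E) B = ennreal (integral\<^sup>L M (\<lambda>\<omega>. exp (- t * S \<omega>)))" .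
  have "measure (distr M borel S \<Otimes>\<^sub>M distr M borel E) B = integral\<^sup>L M (\<lambda>\<omega>. exp (- t * S \<omega>))"
    unfolding measure_def em by (simp add: lapS)
  then have "measure M {\<omega> \<in> space M. eps j \<omega> * (\<Sum>k=1..K. a k * Z k \<omega>) powr a0 \<le> x}
       = exp (- (\<Sum>k=1..K. (th k + t * a k) powr al - th k powr al))"
    using m1 lapS by simp
  then show ?thesis unfolding t_def .
qed



lemma powr_facts:
  fixes tau x a0 :: real
  assumes tau: "tau > 0" and x: "x > 0" and a0: "a0 > 0"
  shows "x powr (-1/a0) = tau powr (-1/a0) * (x/tau) powr (-1/a0)"
    and "x powr (-2/a0) = tau powr (-2/a0) * ((x/tau) powr (-1/a0))^2"
    and "(tau powr (1/a0))^2 = tau powr (2/a0)"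
    and "tau powr (1/a0) * tau powr (-1/a0) = 1"
    and "tau powr (2/a0) * tau powr (-2/a0) = 1"
proof -
  show 1: "x powr (-1/a0) = tau powr (-1/a0) * (x/tau) powr (-1/a0)"
    using tau x by (simp add: powr_divide)
  have "((x/tau) powr (-1/a0))^2 = (x/tau) powr (-2/a0)"
    using tau x by (simp add: powr_realpow[symmetric] powr_powr)
  then show "x powr (-2/a0) = tau powr (-2/a0) * ((x/tau) powr (-1/a0))^2"
    using tau x by (simp add: powr_divide)
  show "(tau powr (1/a0))^2 = tau powr (2/a0)"
    using tau by (simp add: powr_realpow[symmetric] powr_powr)
  show "tau powr (1/a0) * tau powr (-1/a0) = 1"
    using tau by (simp add: powr_add[symmetric])
  show "tau powr (2/a0) * tau powr (-2/a0) = 1"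
    using tau by (simp add: powr_add[symmetric])
qed

lemma powr_sq:
  fixes w al :: real
  shows "w powr (2/al) = (w powr (1/al))^2"
  by (simp add: power2_eq_square powr_add[symmetric])

theorem corollary2p2:
  fixes M :: "'a measure"
    and \<alpha> \<alpha>0 \<tau> :: real and K ns j :: nat
    and \<theta> :: "nat \<Rightarrow> real" and w :: "nat \<Rightarrow> nat \<Rightarrow> real"
    and Z eps :: "nat \<Rightarrow> 'a \<Rightarrow> real"
  assumes "prob_space M"
    and "0 < \<alpha>" "\<alpha> < 1" "0 < \<alpha>0" "0 < \<tau>" "1 \<le> K"
    and "\<forall>k\<in>{1..K}. 0 \<le> \<theta> k"
    and "\<forall>k\<in>{1..K}. \<forall>i\<in>{1..ns}. 0 \<le> w k i"
    and "\<forall>i\<in>{1..ns}. Cset K w i \<noteq> {}"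
    and indep: "prob_space.indep_vars M (\<lambda>_. borel) (case_sum Z eps) ({1..K} <+> {1..ns})"
    and Zpos: "\<forall>k\<in>{1..K}. AE \<omega> in M. 0 < Z k \<omega>"
    and Zlap: "\<forall>k\<in>{1..K}. \<forall>s\<ge>0.
         integral\<^sup>L M (\<lambda>\<omega>. exp (- s * Z k \<omega>)) = exp (- ((\<theta> k + s) powr \<alpha> - \<theta> k powr \<alpha>))"
    and epsdist: "\<forall>i\<in>{1..ns}. \<forall>x>0.
         measure M {\<omega> \<in> space M. eps i \<omega> \<le> x} = exp (- ((x / \<tau>) powr (- 1 / \<alpha>0)))"
    and "j \<in> {1..ns}"
    and "Cset K w j \<inter> Dset K \<theta> = {}"
  shows "cconst' \<alpha> \<alpha>0 \<tau> K \<theta> w j = 0 \<and>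
    (\<lambda>x. (1 - Fdist M (Xproc \<alpha> \<alpha>0 K w Z eps j) x)
          - (cconst \<alpha> \<alpha>0 \<tau> K \<theta> w j * x powr (- 1 / \<alpha>0)
             + (dconst \<alpha> \<alpha>0 \<tau> K \<theta> w j - (cconst \<alpha> \<alpha>0 \<tau> K \<theta> w j)\<^sup>2 / 2) * x powr (- 2 / \<alpha>0)))
    \<in> o[at_top](\<lambda>x. x powr (- 2 / \<alpha>0))"
proof -
  note P = assms(1) and al = assms(2,3) and a0 = assms(4) and tau = assms(5)
    and thnn = assms(7) and wnn = assms(8) and Cne = assms(9) and j = assms(14) and disj = assms(15)
  define a where "a k = w k j powr (1/\<alpha>)" for k
  define A where "A = Dbar K \<theta>"
  have wj: "\<forall>k\<in>{1..K}. 0 \<le> w k j" using wnn j by auto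
  have wD: "w k j = 0" if "k \<in> Dset K \<theta>" for k
  proof (rule ccontr)
    assume "w k j \<noteq> 0"
    with that have "k \<in> Cset K w j \<inter> Dset K \<theta>" by (auto simp: Cset_def Dset_def)
    with disj show False by simp
  qed
  have c'0: "cconst' \<alpha> \<alpha>0 \<tau> K \<theta> w j = 0"
    unfolding cconst'_def using wD by simp
  have finA: "finite A" and AK: "A \<subseteq> {1..K}" by (auto simp: A_def Dbar_def)
  have thpos: "\<forall>k\<in>A. \<theta> k > 0"
    using thnn by (auto simp: A_def Dbar_def Dset_def order_le_less)
  have anon: "\<forall>k\<in>{1..K}. 0 \<le> a k" by (simp add: a_def)
  obtain k0 where k0: "k0 \<in> Cset K w j" using Cne j by blast
  have k0K: "k0 \<in> {1..K}" and wk0: "w k0 j \<noteq> 0" using k0 by (auto simp: Cset_def)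
  have k0A: "k0 \<in> A" using k0 disj k0K by (auto simp: A_def Dbar_def)
  have ak0: "a k0 > 0" using wk0 wj k0K by (auto simp: a_def)
  have exA: "\<exists>k\<in>A. a k > 0" using k0A ak0 by blast
  have exK: "\<exists>k\<in>{1..K}. a k > 0" using k0K ak0 by blast
  define Ph where "Ph t = (\<Sum>k\<in>A. ((\<theta> k + t * a k) powr \<alpha> - \<theta> k powr \<alpha>))" for t
  define C where "C = \<alpha> * (\<Sum>k\<in>A. \<theta> k powr (\<alpha> - 1) * a k)"
  define D where "D = \<alpha> * (\<alpha> - 1) / 2 * (\<Sum>k\<in>A. \<theta> k powr (\<alpha> - 2) * (a k)^2)"
  have sumK: "(\<Sum>k=1..K. (\<theta> k + t * a k) powr \<alpha> - \<theta> k powr \<alpha>) = Ph t" for t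
    unfolding Ph_def
  proof (rule sum.mono_neutral_right)
    show "finite {1..K}" by simp
    show "A \<subseteq> {1..K}" by (rule AK)
    show "\<forall>k\<in>{1..K} - A. (\<theta> k + t * a k) powr \<alpha> - \<theta> k powr \<alpha> = 0"
    proof
      fix k assume k: "k \<in> {1..K} - A"
      then have kD: "k \<in> Dset K \<theta>" by (auto simp: A_def Dbar_def)
      then have "\<theta> k = 0" by (simp add: Dset_def)
      moreover have "a k = 0" using wD[OF kD] by (simp add: a_def)
      ultimately show "(\<theta> k + t * a k) powr \<alpha> - \<theta> k powr \<alpha> = 0" by simp
    qed
  qed
  have cC: "cconst \<alpha> \<alpha>0 \<tau> K \<theta> w j = \<tau> powr (1/\<alpha>0) * C"
    unfolding cconst_def C_def A_def a_def by simp
  have dD: "dconst \<alpha> \<alpha>0 \<tau> K \<theta> w j = \<tau> powr (2/\<alpha>0) * D"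
  proof -
    have "(\<Sum>k\<in>Dbar K \<theta>. \<theta> k powr (\<alpha> - 2) * w k j powr (2 / \<alpha>)) = (\<Sum>k\<in>A. \<theta> k powr (\<alpha> - 2) * (a k)^2)"
      unfolding A_def a_def by (simp add: powr_sq[of _ \<alpha>])
    then show ?thesis unfolding dconst_def D_def by simp
  qed
  have lim: "((\<lambda>t. (1 - exp (- Ph t) - C*t - (D - C^2/2)*t^2)/t^2) \<longlongrightarrow> 0) (at_right 0)"
    unfolding Ph_def C_def D_def
    using main_asymp[OF finA thpos _ exA al(1)] anon AK by blast
  have "(\<lambda>x. (1 - Fdist M (Xproc \<alpha> \<alpha>0 K w Z eps j) x)
          - (cconst \<alpha> \<alpha>0 \<tau> K \<theta> w j * x powr (- 1 / \<alpha>0)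
             + (dconst \<alpha> \<alpha>0 \<tau> K \<theta> w j - (cconst \<alpha> \<alpha>0 \<tau> K \<theta> w j)\<^sup>2 / 2) * x powr (- 2 / \<alpha>0)))
    \<in> o[at_top](\<lambda>x. x powr (- 2 / \<alpha>0))"
  proof (rule final_asymp[OF tau a0 lim], intro allI impI)
    fix x :: real assume x: "x > 0"
    have epsj: "\<forall>x>0. measure M {\<omega> \<in> space M. eps j \<omega> \<le> x} = exp (- ((x / \<tau>) powr (- 1 / \<alpha>0)))"
      using epsdist j by blast
    define T where "T = (x/\<tau>) powr (-1/\<alpha>0)"
    have F: "Fdist M (Xproc \<alpha> \<alpha>0 K w Z eps j) x = exp (- Ph T)"
      unfolding Fdist_def Xproc_def T_def sumK[symmetric]
      using laplace_F[OF P indep Zpos Zlap epsj j anon exK tau a0 x]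
      by (simp add: a_def)
    note pf = powr_facts[OF tau x a0]
    show "1 - Fdist M (Xproc \<alpha> \<alpha>0 K w Z eps j) x -
         (cconst \<alpha> \<alpha>0 \<tau> K \<theta> w j * x powr (- 1 / \<alpha>0) +
          (dconst \<alpha> \<alpha>0 \<tau> K \<theta> w j - (cconst \<alpha> \<alpha>0 \<tau> K \<theta> w j)\<^sup>2 / 2) * x powr (- 2 / \<alpha>0)) =
         1 - exp (- Ph ((x / \<tau>) powr (- 1 / \<alpha>0))) - C * (x / \<tau>) powr (- 1 / \<alpha>0) -
         (D - C\<^sup>2 / 2) * ((x / \<tau>) powr (- 1 / \<alpha>0))\<^sup>2"
      unfolding F cC dD T_def[symmetric] pf(1,2) power_mult_distrib pf(3)
    proof -
      have e1: "\<tau> powr (1 / \<alpha>0) * C * (\<tau> powr (- 1 / \<alpha>0) * T) = C * T"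
        using pf(4) by (simp add: algebra_simps)
      have e2: "(\<tau> powr (2 / \<alpha>0) * D - \<tau> powr (2 / \<alpha>0) * C\<^sup>2 / 2) * (\<tau> powr (- 2 / \<alpha>0) * T\<^sup>2)
          = (D - C\<^sup>2 / 2) * T\<^sup>2"
        using pf(5) by (simp add: algebra_simps)
      show "1 - exp (- Ph T) - (\<tau> powr (1 / \<alpha>0) * C * (\<tau> powr (- 1 / \<alpha>0) * T) +
          (\<tau> powr (2 / \<alpha>0) * D - \<tau> powr (2 / \<alpha>0) * C\<^sup>2 / 2) * (\<tau> powr (- 2 / \<alpha>0) * T\<^sup>2)) =
          1 - exp (- Ph T) - C * T - (D - C\<^sup>2 / 2) * T\<^sup>2"
        unfolding e1 e2 by simp
    qed
  qed
  with c'0 show ?thesis by blast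
qed

end
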